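(* For almost every $\tau\in\mathbb{R}$ (with respect to Lebesgue measure) there exists $N_0(\tau)$ such that for all $N\ge N_0(\tau)$, \[ \mathfrak{m}_N(\tau)>\exp(-0.665\,N). \]
   Context: For a positive integer $N$ and $\tau\in\mathbb{R}$, $\mathfrak{m}_N(\tau):=\min\left\{\left|\tau-\sum_{n=1}^N s_n/n\right| : s_1,\dots,s_N\in\{-1,+1\}\right\}$. *)

theory Defs
  imports "HOL-Analysis.Analysis"
begin

definition frak_m :: "nat \<Rightarrow> real \<Rightarrow> real" where
  "frak_m N \<tau> = Min ((\<lambda>s. \<bar>\<tau> - (\<Sum>n=1..N. s n / real n)\<bar>) ` ({1..N} \<rightarrow>\<^sub>E {-1, 1}))"

end

theory Submission
  imports Defs
begin

definition W :: "nat set \<Rightarrow> real set" where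
  "W I = (\<lambda>s. \<Sum>n\<in>I. s n / real n) ` (I \<rightarrow>\<^sub>E {-1, 1})"

lemma W_finite: "finite I \<Longrightarrow> finite (W I)"
  unfolding W_def by (intro finite_imageI finite_PiE) auto

lemma W_card_le: "finite I \<Longrightarrow> card (W I) \<le> 2 ^ card I"
proof -
  assume f: "finite I"
  have "card (W I) \<le> card (I \<rightarrow>\<^sub>E ({-1, 1}::real set))"
    unfolding W_def by (rule card_image_le) (use f in \<open>intro finite_PiE; auto\<close>)
  also have "\<dots> = 2 ^ card I" using f by (simp add: card_PiE numeral_2_eq_2)
  finally show ?thesis .
qed

lemma W_empty: "W {} = {0}"
  unfolding W_def by simp

lemma W_union:
  assumes f: "finite I" "finite J" and d: "I \<inter> J = {}"
  shows "card (W (I \<union> J)) \<le> card (W I) * card (W J)"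
proof -
  have sub: "W (I \<union> J) \<subseteq> (\<lambda>(a,b). a + b) ` (W I \<times> W J)"
  proof
    fix x assume "x \<in> W (I \<union> J)"
    then obtain s where s: "s \<in> (I \<union> J) \<rightarrow>\<^sub>E {-1,1}" and x: "x = (\<Sum>n\<in>I \<union> J. s n / real n)"
      unfolding W_def by auto
    have x2: "x = (\<Sum>n\<in>I. s n / real n) + (\<Sum>n\<in>J. s n / real n)"
      using x f d by (simp add: sum.union_disjoint)
    have a: "(\<Sum>n\<in>I. s n / real n) \<in> W I"
    proof -
      have r: "restrict s I \<in> I \<rightarrow>\<^sub>E {-1,1}" using s by auto
      have e: "(\<Sum>n\<in>I. s n / real n) = (\<Sum>n\<in>I. restrict s I n / real n)"
        by (rule sum.cong) auto
      show ?thesis unfolding W_def e by (rule imageI[OF r])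
    qed
    have b: "(\<Sum>n\<in>J. s n / real n) \<in> W J"
    proof -
      have r: "restrict s J \<in> J \<rightarrow>\<^sub>E {-1,1}" using s by auto
      have e: "(\<Sum>n\<in>J. s n / real n) = (\<Sum>n\<in>J. restrict s J n / real n)"
        by (rule sum.cong) auto
      show ?thesis unfolding W_def e by (rule imageI[OF r])
    qed
    have ab: "((\<Sum>n\<in>I. s n / real n), (\<Sum>n\<in>J. s n / real n)) \<in> W I \<times> W J"
      using a b by (rule SigmaI)
    show "x \<in> (\<lambda>(a,b). a + b) ` (W I \<times> W J)"
      unfolding x2 by (rule image_eqI[OF _ ab]) simp
  qed
  have "card (W (I \<union> J)) \<le> card ((\<lambda>(a,b). a + b) ` (W I \<times> W J))"
    by (rule card_mono[OF _ sub]) (use f W_finite in auto)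
  also have "\<dots> \<le> card (W I \<times> W J)"
    by (rule card_image_le) (use f W_finite in auto)
  also have "\<dots> = card (W I) * card (W J)" by (simp add: card_cartesian_product)
  finally show ?thesis .
qed

lemma W_scale:
  assumes n: "n > 0" and f: "finite B"
  shows "card (W ((\<lambda>d. n * d) ` B)) \<le> card (W B)"
proof -
  have inj: "inj_on (\<lambda>d. n * d) B" using n by (auto simp: inj_on_def)
  have sub: "W ((\<lambda>d. n * d) ` B) \<subseteq> (\<lambda>x. x / real n) ` W B"
  proof
    fix x assume "x \<in> W ((\<lambda>d. n * d) ` B)"
    then obtain s where s: "s \<in> ((\<lambda>d. n * d) ` B) \<rightarrow>\<^sub>E {-1,1}"
      and x: "x = (\<Sum>m\<in>(\<lambda>d. n * d) ` B. s m / real m)"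
      unfolding W_def by auto
    define t where "t = restrict (\<lambda>d. s (n * d)) B"
    have t: "t \<in> B \<rightarrow>\<^sub>E {-1,1}" using s unfolding t_def by auto
    have "x = (\<Sum>d\<in>B. s (n * d) / real (n * d))"
      using x by (simp add: sum.reindex[OF inj])
    also have "\<dots> = (\<Sum>d\<in>B. t d / real d) / real n"
      unfolding t_def by (simp add: sum_divide_distrib algebra_simps)
    finally have "x = (\<Sum>d\<in>B. t d / real d) / real n" .
    moreover have "(\<Sum>d\<in>B. t d / real d) \<in> W B" using t unfolding W_def by auto
    ultimately show "x \<in> (\<lambda>x. x / real n) ` W B" by auto
  qed
  have "card (W ((\<lambda>d. n * d) ` B)) \<le> card ((\<lambda>x. x / real n) ` W B)"
    by (rule card_mono[OF _ sub]) (use f W_finite in auto)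
  also have "\<dots> \<le> card (W B)" by (rule card_image_le) (use f W_finite in auto)
  finally show ?thesis .
qed

lemma W_num:
  assumes f: "finite B" and L: "L > 0" and dv: "\<And>d. d \<in> B \<Longrightarrow> d > 0 \<and> d dvd L"
  shows "card (W B) \<le> (\<Sum>d\<in>B. L div d) + 1"
proof -
  define S where "S = (\<Sum>d\<in>B. L div d)"
  have sub: "W B \<subseteq> (\<lambda>j::nat. (2 * real j - real S) / real L) ` {0..S}"
  proof
    fix x assume "x \<in> W B"
    then obtain s where s: "s \<in> B \<rightarrow>\<^sub>E {-1,1}" and x: "x = (\<Sum>d\<in>B. s d / real d)"
      unfolding W_def by auto
    define j where "j = (\<Sum>d\<in>{d\<in>B. s d = 1}. L div d)"
    have jS: "j \<le> S" unfolding j_def S_def by (rule sum_mono2) (use f in auto)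
    have e1: "s d / real d = s d * real (L div d) / real L" if "d \<in> B" for d
    proof -
      have "real d * real (L div d) = real L" using dv[OF that]
        by (metis dvd_mult_div_cancel of_nat_mult)
      moreover have "real d > 0" using dv[OF that] by simp
      ultimately show ?thesis using L by (simp add: field_simps)
    qed
    have e2: "s d * real (L div d) = 2 * (if s d = 1 then real (L div d) else 0) - real (L div d)"
      if "d \<in> B" for d
    proof -
      have "s d = -1 \<or> s d = 1" using s that by auto
      then show ?thesis by auto
    qed
    have "x = (\<Sum>d\<in>B. s d * real (L div d)) / real L"
      using x e1 by (simp add: sum_divide_distrib)
    also have "(\<Sum>d\<in>B. s d * real (L div d)) = 
        2 * (\<Sum>d\<in>B. (if s d = 1 then real (L div d) else 0)) - (\<Sum>d\<in>B. real (L div d))"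
      using e2 by (simp add: sum_subtractf sum_distrib_left)
    also have "(\<Sum>d\<in>B. (if s d = 1 then real (L div d) else 0)) = real j"
      unfolding j_def using f by (simp add: sum.inter_filter[symmetric])
    also have "(\<Sum>d\<in>B. real (L div d)) = real S" unfolding S_def by simp
    finally show "x \<in> (\<lambda>j::nat. (2 * real j - real S) / real L) ` {0..S}"
      using jS by auto
  qed
  have "card (W B) \<le> card ((\<lambda>j::nat. (2 * real j - real S) / real L) ` {0..S})"
    by (rule card_mono[OF _ sub]) auto
  also have "\<dots> \<le> card {0..S}" by (rule card_image_le) auto
  finally show ?thesis unfolding S_def by simp
qed

lemma c0: "coprime (5::nat) 6"
  by (simp add: coprime_iff_gcd_eq_1 gcd_non_0_nat)
lemma c1: "n mod 6 = 1 \<or> n mod 6 = (5::nat) \<Longrightarrow> coprime n 6"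
proof -
  assume a: "n mod 6 = 1 \<or> n mod 6 = (5::nat)"
  have e: "coprime n 6 \<longleftrightarrow> coprime (n mod 6) (6::nat)" by simp
  show ?thesis using a
  proof (elim disjE)
    assume h: "n mod 6 = 1" show ?thesis unfolding e h by simp
  next
    assume h: "n mod 6 = 5" show ?thesis unfolding e h by (rule c0)
  qed
qed

lemma c2: "coprime n (6::nat) \<Longrightarrow> e dvd 24 \<Longrightarrow> coprime n e"
proof -
  assume a: "coprime n (6::nat)" "e dvd 24"
  have "coprime n ((6::nat)^3)" unfolding coprime_power_right_iff using a by simp
  moreover have "e dvd (6::nat)^3" using a(2) by (rule dvd_trans) simp
  ultimately show ?thesis by (meson coprime_divisors dvd_refl)
qed
lemma c3: "coprime n (6::nat) \<Longrightarrow> coprime m 6 \<Longrightarrow> d dvd 24 \<Longrightarrow> e dvd 24 \<Longrightarrow> n * d = m * e \<Longrightarrow> n = m"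
proof -
  assume a: "coprime n (6::nat)" "coprime m 6" "d dvd 24" "e dvd 24" "n * d = m * e"
  have "n dvd m * e" using a(5) by (metis dvd_triv_left)
  then have "n dvd m" using c2[OF a(1) a(4)] by (simp add: coprime_dvd_mult_left_iff)
  moreover have "m dvd n * d" using a(5) by (metis dvd_triv_left)
  then have "m dvd n" using c2[OF a(2) a(3)] by (simp add: coprime_dvd_mult_left_iff)
  ultimately show ?thesis by (simp add: dvd_antisym)
qed

lemma W_UN:
  assumes "finite A" "\<And>n. n \<in> A \<Longrightarrow> finite (G n)"
    "\<And>n m. n \<in> A \<Longrightarrow> m \<in> A \<Longrightarrow> n \<noteq> m \<Longrightarrow> G n \<inter> G m = {}"
  shows "card (W (\<Union>n\<in>A. G n)) \<le> (\<Prod>n\<in>A. card (W (G n)))"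
  using assms
proof (induction A rule: finite_induct)
  case empty
  then show ?case by (simp add: W_empty)
next
  case (insert a F)
  have "card (W (\<Union>n\<in>insert a F. G n)) = card (W (G a \<union> (\<Union>n\<in>F. G n)))" by simp
  also have "\<dots> \<le> card (W (G a)) * card (W (\<Union>n\<in>F. G n))"
    by (rule W_union) (use insert in auto)
  also have "\<dots> \<le> card (W (G a)) * (\<Prod>n\<in>F. card (W (G n)))"
    by (rule mult_le_mono2) (rule insert.IH; use insert in auto)
  also have "\<dots> = (\<Prod>n\<in>insert a F. card (W (G n)))" using insert by simp
  finally show ?case .
qed

definition D24 :: "nat set" where "D24 = {1,2,3,4,6,8,12,24}"
definition D12 :: "nat set" where "D12 = {1,2,3,4,6,12}"

lemma D24_card: "card (W D24) \<le> 61"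
proof -
  have "card (W D24) \<le> (\<Sum>d\<in>D24. 24 div d) + 1"
    by (rule W_num) (auto simp: D24_def)
  also have "\<dots> = 61" by (simp add: D24_def)
  finally show ?thesis .
qed

lemma D12_card: "card (W D12) \<le> 29"
proof -
  have "card (W D12) \<le> (\<Sum>d\<in>D12. 12 div d) + 1"
    by (rule W_num) (auto simp: D12_def)
  also have "\<dots> = 29" by (simp add: D12_def)
  finally show ?thesis .
qed

lemma count_coprime:
  "card {n\<in>{1..M}. coprime n (6::nat)} \<ge> 2 * (M div 6)"
proof -
  define q where "q = M div 6"
  have sub: "(\<lambda>k. 6*k+1) ` {..<q} \<union> (\<lambda>k. 6*k+5) ` {..<q} \<subseteq> {n\<in>{1..M}. coprime n (6::nat)}"
  proof -
    have "6 * q \<le> M" unfolding q_def by simp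
    then show ?thesis using c1 by auto
  qed
  have disj: "(\<lambda>k. 6*k+1) ` {..<q} \<inter> (\<lambda>k. 6*k+5) ` {..<q} = {}" by auto presburger
  have "card ((\<lambda>k. 6*k+1) ` {..<q} \<union> (\<lambda>k. 6*k+5) ` {..<q}) = 2 * q"
    using disj by (simp add: card_Un_disjoint card_image inj_on_def)
  moreover have "card ((\<lambda>k. 6*k+1) ` {..<q} \<union> (\<lambda>k. 6*k+5) ` {..<q}) \<le> card {n\<in>{1..M}. coprime n (6::nat)}"
    by (rule card_mono[OF _ sub]) auto
  ultimately show ?thesis unfolding q_def by simp
qed

lemma count_main:
  "real (card (W {1..N})) \<le> 2 ^ N * (29/64) ^ card {n\<in>{1..N div 12}. coprime n (6::nat)}
      * (61/116) ^ card {n\<in>{1..N div 24}. coprime n (6::nat)}"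
proof -
  define A where "A = {n\<in>{1..N div 12}. coprime n (6::nat)}"
  define A1 where "A1 = {n\<in>{1..N div 24}. coprime n (6::nat)}"
  define G where "G n = (\<lambda>d. n * d) ` (if 24 * n \<le> N then D24 else D12)" for n
  define k where "k n = (if 24 * n \<le> N then 8 else (6::nat))" for n
  define c where "c n = (if 24 * n \<le> N then 61 else (29::nat))" for n
  define U where "U = (\<Union>n\<in>A. G n)"
  have finA: "finite A" unfolding A_def by auto
  have A1eq: "A1 = {n\<in>A. 24 * n \<le> N}"
    unfolding A1_def A_def by auto
  have dv: "d dvd 24" if "d \<in> D24 \<union> D12" for d using that unfolding D24_def D12_def by auto
  have finG: "finite (G n)" for n unfolding G_def D24_def D12_def by auto
  have disj: "G n \<inter> G m = {}" if "n \<in> A" "m \<in> A" "n \<noteq> m" for n m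
  proof (rule ccontr)
    assume "G n \<inter> G m \<noteq> {}"
    then obtain d e where de: "d \<in> D24 \<union> D12" "e \<in> D24 \<union> D12" "n * d = m * e"
      unfolding G_def by (auto split: if_splits)
    have "n = m" by (rule c3[OF _ _ dv[OF de(1)] dv[OF de(2)] de(3)]) (use that A_def in auto)
    then show False using that by simp
  qed
  have Usub: "U \<subseteq> {1..N}"
  proof
    fix x assume "x \<in> U"
    then obtain n d where n: "n \<in> A" and x: "x = n * d" and
      d: "d \<in> (if 24 * n \<le> N then D24 else D12)"
      unfolding U_def G_def by auto
    have n1: "n \<ge> 1" "12 * n \<le> N" using n unfolding A_def by auto
    show "x \<in> {1..N}"
    proof (cases "24 * n \<le> N")
      case True
      then have "d \<ge> 1" "d \<le> 24" using d unfolding D24_def by auto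
      then have h: "n * d \<le> n * 24" "1 * 1 \<le> n * d" using n1 by (simp_all only: mult_le_mono2 mult_le_mono)
      have "n * 24 \<le> N" using n1 True by (simp add: mult.commute)
      then have "n * d \<le> N" by (rule order.trans[OF h(1)])
      moreover have "1 \<le> n * d" using h(2) by simp
      ultimately show ?thesis unfolding x by simp
    next
      case False
      then have "d \<ge> 1" "d \<le> 12" using d unfolding D12_def by auto
      then have h: "n * d \<le> n * 12" "1 * 1 \<le> n * d" using n1 by (simp_all only: mult_le_mono2 mult_le_mono)
      have "n * 12 \<le> N" using n1  by (simp add: mult.commute)
      then have "n * d \<le> N" by (rule order.trans[OF h(1)])
      moreover have "1 \<le> n * d" using h(2) by simp
      ultimately show ?thesis unfolding x by simp
    qed
  qed
  have cardG: "card (G n) = k n" if "n \<in> A" for n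
  proof -
    have "n > 0" using that unfolding A_def by auto
    then have "inj_on (\<lambda>d. n * d) X" for X by (auto simp: inj_on_def)
    then show ?thesis unfolding G_def k_def by (simp add: card_image D24_def D12_def)
  qed
  have cardU: "card U = (\<Sum>n\<in>A. k n)"
    unfolding U_def using finA finG disj cardG by (simp add: card_UN_disjoint)
  have cW: "card (W (G n)) \<le> c n" if "n \<in> A" for n
  proof -
    have "n > 0" using that unfolding A_def by auto
    then show ?thesis unfolding G_def c_def
      using W_scale[of n D24] W_scale[of n D12] D24_card D12_card
      by (auto simp: D24_def D12_def)
  qed
  have finU: "finite U" by (rule finite_subset[OF Usub]) simp
  have UR: "{1..N} = U \<union> ({1..N} - U)" using Usub by blast
  have "card (W {1..N}) \<le> card (W U) * card (W ({1..N} - U))"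
    by (subst UR, rule W_union[OF finU]) auto
  also have "\<dots> \<le> (\<Prod>n\<in>A. c n) * 2 ^ (N - card U)"
  proof (rule mult_le_mono)
    show "card (W U) \<le> (\<Prod>n\<in>A. c n)"
    proof -
      have "card (W U) \<le> (\<Prod>n\<in>A. card (W (G n)))"
        unfolding U_def by (rule W_UN) (use finA finG disj in auto)
      also have "\<dots> \<le> (\<Prod>n\<in>A. c n)" by (rule prod_mono) (use cW in auto)
      finally show ?thesis .
    qed
    have "card (W ({1..N} - U)) \<le> 2 ^ card ({1..N} - U)" by (rule W_card_le) auto
    also have "card ({1..N} - U) = N - card U"
      using Usub finU by (simp add: card_Diff_subset)
    finally show "card (W ({1..N} - U)) \<le> 2 ^ (N - card U)" .
  qed
  finally have n0: "card (W {1..N}) \<le> (\<Prod>n\<in>A. c n) * 2 ^ (N - card U)" .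
  have n1: "real (card (W {1..N})) \<le> (\<Prod>n\<in>A. real (c n)) * 2 ^ (N - card U)"
    using of_nat_mono[OF n0, where ?'a=real] by simp
  have UN: "card U \<le> N" using card_mono[OF _ Usub] by simp
  have p1: "(\<Prod>n\<in>A. (2::real) ^ k n) = 2 ^ card U"
    unfolding cardU by (rule power_sum[symmetric])
  have p2: "(2::real) ^ (N - card U) = 2 ^ N / (\<Prod>n\<in>A. 2 ^ k n)"
    unfolding p1 by (rule power_diff[OF _ UN]) simp
  have "(\<Prod>n\<in>A. real (c n)) * 2 ^ (N - card U) = 2 ^ N * ((\<Prod>n\<in>A. real (c n)) / (\<Prod>n\<in>A. 2 ^ k n))"
    unfolding p2 by simp
  also have "(\<Prod>n\<in>A. real (c n)) / (\<Prod>n\<in>A. 2 ^ k n) = (\<Prod>n\<in>A. real (c n) / 2 ^ k n)"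
    by (rule prod_dividef[symmetric])
  also have "(\<Prod>n\<in>A. real (c n) / 2 ^ k n) = (\<Prod>n\<in>A. (29/64) * (if 24 * n \<le> N then 61/116 else 1))"
    by (rule prod.cong) (simp_all add: c_def k_def)
  also have "\<dots> = (29/64) ^ card A * (\<Prod>n\<in>A. (if 24 * n \<le> N then 61/116 else 1))"
    by (simp only: prod.distrib prod_constant)
  also have "(\<Prod>n\<in>A. (if 24 * n \<le> N then 61/116 else (1::real))) = (61/116) ^ card A1"
  proof -
    have "(\<Prod>n\<in>A. (if 24 * n \<le> N then 61/116 else (1::real)))
        = (\<Prod>n\<in>A \<inter> {n. 24 * n \<le> N}. 61/116) * (\<Prod>n\<in>A \<inter> - {n. 24 * n \<le> N}. 1)"
      by (rule prod.If_cases[OF finA])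
    also have "A \<inter> {n. 24 * n \<le> N} = A1" unfolding A1eq by blast
    finally show ?thesis by simp
  qed
  finally show ?thesis using n1 unfolding A_def A1_def by simp
qed

lemma count_pow:
  "real (card (W {1..N})) \<le> 2 ^ N * ((29/64)^4 * (61/116)^2) ^ (N div 144)"
proof -
  define K where "K = N div 144"
  have a: "card {n\<in>{1..N div 12}. coprime n (6::nat)} \<ge> 4 * K"
  proof -
    have e1: "(N div 12) div 6 = N div 72" by (simp add: div_mult2_eq[symmetric])
    have e2: "N div 144 = (N div 72) div 2" using div_mult2_eq[of N 72 2] by simp
    have "4 * K \<le> 2 * ((N div 12) div 6)" unfolding K_def e1 e2 by linarith
    then show ?thesis using count_coprime[of "N div 12"] by linarith
  qed
  have b: "card {n\<in>{1..N div 24}. coprime n (6::nat)} \<ge> 2 * K"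
  proof -
    have "2 * K \<le> 2 * ((N div 24) div 6)" unfolding K_def by (simp add: div_mult2_eq[symmetric])
    then show ?thesis using count_coprime[of "N div 24"] by linarith
  qed
  have "real (card (W {1..N})) \<le> 2 ^ N * (29/64) ^ card {n\<in>{1..N div 12}. coprime n (6::nat)}
      * (61/116) ^ card {n\<in>{1..N div 24}. coprime n (6::nat)}" by (rule count_main)
  also have "\<dots> \<le> 2 ^ N * (29/64) ^ (4 * K) * (61/116) ^ (2 * K)"
  proof -
    have p1: "(29/64::real) ^ card {n\<in>{1..N div 12}. coprime n (6::nat)} \<le> (29/64) ^ (4 * K)"
      by (rule power_decreasing[OF a]) auto
    have p2: "(61/116::real) ^ card {n\<in>{1..N div 24}. coprime n (6::nat)} \<le> (61/116) ^ (2 * K)"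
      by (rule power_decreasing[OF b]) auto
    show ?thesis by (rule mult_mono[OF mult_left_mono[OF p1]]) (use p2 in auto)
  qed
  also have "\<dots> = 2 ^ N * ((29/64)^4 * (61/116)^2) ^ K"
    by (simp add: power_mult power_mult_distrib)
  finally show ?thesis unfolding K_def .
qed

lemma e_ge: "exp (1::real) \<ge> 2.718"
  using e_approx_32 by (simp add: abs_if split: if_split_asm)

lemma exp_big: "(2::real)^144 * ((29/64)^4*(61/116)^2) < exp (95.76)"
proof -
  have "(2::real)^144 * ((29/64)^4*(61/116)^2) < 2.718^95 * 1.76" by (simp add: power_divide)
  also have "\<dots> \<le> exp 1 ^ 95 * exp 0.76"
    by (intro mult_mono power_mono e_ge) (use exp_ge_add_one_self[of "0.76::real"] in auto)
  also have "\<dots> = exp (95.76)"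
    by (simp add: exp_of_nat_mult[symmetric] exp_add[symmetric])
  finally show ?thesis .
qed

lemma frak_m_ex:
  assumes "frak_m N \<tau> \<le> r"
  shows "\<exists>v\<in>W {1..N}. \<bar>\<tau> - v\<bar> \<le> r"
proof -
  let ?P = "{1..N} \<rightarrow>\<^sub>E ({-1, 1}::real set)"
  let ?f = "\<lambda>s. \<bar>\<tau> - (\<Sum>n=1..N. s n / real n)\<bar>"
  have fin: "finite (?f ` ?P)" by (intro finite_imageI finite_PiE) auto
  have ne: "?P \<noteq> {}" by (simp add: PiE_eq_empty_iff)
  have "Min (?f ` ?P) \<in> ?f ` ?P" using fin ne by (intro Min_in) auto
  then obtain s where s: "s \<in> ?P" "frak_m N \<tau> = ?f s" unfolding frak_m_def by auto
  show ?thesis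
    by (rule bexI[of _ "\<Sum>n=1..N. s n / real n"]) (use s assms in \<open>auto simp: W_def\<close>)
qed

theorem proposition2p7:
  shows "AE \<tau> in lborel. \<exists>N0::nat. \<forall>N\<ge>N0. frak_m N \<tau> > exp (- 0.665 * real N)"
proof -
  define r where "r N = exp (- 0.665 * real N)" for N :: nat
  define E where "E N = (\<Union>v\<in>W {1..N}. cball v (r N))" for N
  define \<beta> :: real where "\<beta> = (29/64)^4*(61/116)^2"
  define \<gamma> :: real where "\<gamma> = 2 * exp (- 0.665)"
  define \<rho> where "\<rho> = \<gamma> ^ 144 * \<beta>"
  define C where "C = 2 * (1 + \<gamma>) ^ 143"
  have gpos: "\<gamma> > 0" unfolding \<gamma>_def by simp
  have bpos: "\<beta> > 0" unfolding \<beta>_def by simp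
  have rpos: "\<rho> > 0" unfolding \<rho>_def using gpos bpos by simp
  have rlt: "\<rho> < 1"
  proof -
    have e1: "exp (- 0.665::real) ^ 144 = exp (of_nat 144 * (- 0.665))"
      by (rule exp_of_nat_mult[symmetric])
    also have "\<dots> = exp (- 95.76)" by simp
    also have "\<dots> = inverse (exp 95.76)" by (rule exp_minus)
    finally have e2: "exp (- 0.665::real) ^ 144 = inverse (exp 95.76)" .
    have gb: "2^144 * \<beta> < exp 95.76" using exp_big unfolding \<beta>_def .
    have "\<rho> = (2^144 * \<beta>) * inverse (exp 95.76)"
      unfolding \<rho>_def \<gamma>_def power_mult_distrib e2 by (simp only: ac_simps)
    also have "\<dots> = (2^144 * \<beta>) / exp 95.76" by (rule divide_inverse[symmetric])
    also have "\<dots> < 1" using gb by (subst divide_less_eq) simp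
    finally show ?thesis .
  qed
  have meas: "E N \<in> sets lborel" for N
    unfolding E_def by (intro sets.finite_UN W_finite) (auto intro: borel_closed)
  have fin: "emeasure lborel (E N) < \<infinity>" for N
    unfolding E_def by (intro emeasure_bounded_finite bounded_UN W_finite) auto
  have mball: "measure lborel (cball v (r N)) = 2 * r N" for v :: real and N
  proof -
    have "r N \<ge> 0" unfolding r_def by simp
    then show ?thesis unfolding cball_eq_atLeastAtMost by (simp add: measure_def)
  qed
  have mE: "measure lborel (E N) \<le> real (card (W {1..N})) * (2 * r N)" for N
  proof -
    have "measure lborel (E N) \<le> (\<Sum>v\<in>W {1..N}. measure lborel (cball v (r N)))"
      unfolding E_def by (rule measure_UNION_le) (auto intro: W_finite borel_closed)
    also have "\<dots> = real (card (W {1..N})) * (2 * r N)" by (simp add: mball)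
    finally show ?thesis .
  qed
  have mb: "measure lborel (E N) \<le> C * \<rho> ^ (N div 144)" for N
  proof -
    define K where "K = N div 144"
    define j where "j = N mod 144"
    have Nj: "N = 144 * K + j" unfolding K_def j_def by simp
    have j: "j \<le> 143" unfolding j_def by simp
    have rN: "r N = exp (- 0.665) ^ N"
    proof -
      have "exp (- 0.665::real) ^ N = exp (of_nat N * (- 0.665))" by (rule exp_of_nat_mult[symmetric])
      also have "of_nat N * (- 0.665::real) = - 0.665 * real N" by simp
      finally show ?thesis unfolding r_def by simp
    qed
    have "measure lborel (E N) \<le> 2 ^ N * \<beta> ^ K * (2 * r N)"
      using mE[of N] count_pow[of N] unfolding \<beta>_def K_def r_def
      by (smt (verit) exp_gt_zero mult_right_mono)
    also have "\<dots> = 2 * \<gamma> ^ N * \<beta> ^ K"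
      unfolding rN \<gamma>_def by (simp add: power_mult_distrib)
    also have "\<gamma> ^ N = (\<gamma> ^ 144) ^ K * \<gamma> ^ j"
      unfolding Nj by (simp add: power_add power_mult)
    also have "\<gamma> ^ j \<le> (1 + \<gamma>) ^ 143"
    proof -
      have "\<gamma> ^ j \<le> (1 + \<gamma>) ^ j" by (rule power_mono) (use gpos in auto)
      also have "\<dots> \<le> (1 + \<gamma>) ^ 143" by (rule power_increasing[OF j]) (use gpos in auto)
      finally show ?thesis .
    qed
    then have "2 * ((\<gamma> ^ 144) ^ K * \<gamma> ^ j) * \<beta> ^ K \<le> 2 * ((\<gamma> ^ 144) ^ K * (1 + \<gamma>) ^ 143) * \<beta> ^ K"
      using gpos bpos by (intro mult_right_mono mult_left_mono) auto
    also have "\<dots> = C * \<rho> ^ K" unfolding C_def \<rho>_def by (simp add: power_mult_distrib)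
    finally show ?thesis unfolding K_def .
  qed
  define \<sigma> where "\<sigma> = root 144 \<rho>"
  have spow: "\<sigma> ^ 144 = \<rho>" unfolding \<sigma>_def using rpos by (simp add: real_root_pow_pos2)
  have spos: "\<sigma> > 0" unfolding \<sigma>_def using rpos by simp
  have slt: "\<sigma> < 1" unfolding \<sigma>_def using rlt by simp
  have rs: "\<rho> ^ (N div 144) \<le> \<sigma> ^ N / \<sigma> ^ 143" for N
  proof -
    define K where "K = N div 144"
    define j where "j = N mod 144"
    have Nj: "N = 144 * K + j" unfolding K_def j_def by simp
    have j: "j \<le> 143" unfolding j_def by simp
    have "\<sigma> ^ 143 \<le> \<sigma> ^ j" by (rule power_decreasing[OF j]) (use spos slt in auto)
    then have "\<rho> ^ K * \<sigma> ^ 143 \<le> \<rho> ^ K * \<sigma> ^ j" using rpos by (simp add: mult_left_mono)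
    also have "\<rho> ^ K * \<sigma> ^ j = \<sigma> ^ N" unfolding Nj spow[symmetric] by (simp add: power_add power_mult)
    finally show ?thesis unfolding K_def using spos by (simp add: field_simps)
  qed
  have Cpos: "C \<ge> 0" unfolding C_def using gpos by simp
  have summ: "summable (\<lambda>N. measure lborel (E N))"
  proof (rule summable_comparison_test')
    show "summable (\<lambda>N. C / \<sigma> ^ 143 * \<sigma> ^ N)"
      by (rule summable_mult) (rule summable_geometric, use spos slt in auto)
    show "norm (measure lborel (E N)) \<le> C / \<sigma> ^ 143 * \<sigma> ^ N" for N
    proof -
      have "norm (measure lborel (E N)) = measure lborel (E N)" by simp
      also have "\<dots> \<le> C * \<rho> ^ (N div 144)" by (rule mb)
      also have "\<dots> \<le> C * (\<sigma> ^ N / \<sigma> ^ 143)" by (rule mult_left_mono[OF rs Cpos])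
      finally show ?thesis by simp
    qed
  qed
  have AE: "AE x in lborel. eventually (\<lambda>N. x \<in> space lborel - E N) sequentially"
    by (rule borel_cantelli_AE1) (use meas fin summ in auto)
  show ?thesis
  proof (rule AE_mp[OF AE], rule AE_I2, rule impI)
    fix x assume "eventually (\<lambda>N. x \<in> space lborel - E N) sequentially"
    then obtain N0 where N0: "\<And>N. N \<ge> N0 \<Longrightarrow> x \<notin> E N" unfolding eventually_sequentially by auto
    show "\<exists>N0::nat. \<forall>N\<ge>N0. frak_m N x > exp (- 0.665 * real N)"
    proof (intro exI allI impI)
      fix N assume "N \<ge> N0"
      show "frak_m N x > exp (- 0.665 * real N)"
      proof (rule ccontr)
        assume "\<not> frak_m N x > exp (- 0.665 * real N)"
        then have "frak_m N x \<le> r N" unfolding r_def by simp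
        then obtain v where v: "v \<in> W {1..N}" "\<bar>x - v\<bar> \<le> r N" using frak_m_ex by blast
        then have "x \<in> E N" unfolding E_def by (auto simp: dist_real_def abs_minus_commute)
        then show False using N0[OF \<open>N \<ge> N0\<close>] by simp
      qed
    qed
  qed
qed

end
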